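(* Assume the superexponential regime $a_T/T\to\infty$, and let $\hat c_{\mathrm R}(x,\mathbb P,T)=\max_{i\in\Sigma}\ell(x,i)$ for all $x,\mathbb P,T$. Then $\hat c_{\mathrm R}\in\mathcal C$, it satisfies the out-of-sample guarantee with speed $(a_T)$ (indeed $\mathbb P^\infty(c(x,\mathbb P)>\hat c_{\mathrm R}(x,\hat{\mathbb P}_T,T))=0$ for all $T$), and for every $\hat c\in\mathcal C$ satisfying the out-of-sample guarantee with speed $(a_T)$ we have $\hat c_{\mathrm R}\preceq_{\mathcal C}\hat c$.
   Context: Setting: $\Sigma=\{1,\dots,d\}$ ($d\ge2$) is finite; $\mathcal P\subset\mathbb R^d$ is the probability simplex over $\Sigma$ and $\mathcal P^o$ its relative interior (all entries positive). $\mathcal X\subset\mathbb R^n$ is compact and $\ell:\mathcal X\times\Sigma\to\mathbb R$ is continuous in $x$ for each $i$. For $x\in\mathcal X$, $\mu\in\mathbb R^d$ let $c(x,\mu)=\sum_{i\in\Sigma}\ell(x,i)\mu(i)$. Data $\xi_1,\xi_2,\dots$ are i.i.d. with law $\mathbb P\in\mathcal P$, $\mathbb P^\infty$ denotes their joint law, and $\hat{\mathbb P}_T(i)=\frac1T\sum_{t=1}^T\mathbf 1\{\xi_t=i\}$. $(a_T)_{T\ge1}$ is a sequence of positive reals with $a_T\to\infty$. A predictor is a sequence $\hat c=(\hat c(\cdot,\cdot,T))_{T\in\mathbb N}$ of functions $\mathcal X\times\mathcal P\to\mathbb R$. It is regular, written $\hat c\in\mathcal C$, if (i) the sequence $(\hat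 c(\cdot,\cdot,T))_T$ is uniformly bounded and equicontinuous on $\mathcal X\times\mathcal P$, and (ii) each $\hat c(x,\cdot,T)$ is differentiable in $\mathbb P$ and the sequence of derivative maps $(x,\mathbb P)\mapsto\nabla_{\mathbb P}\hat c(x,\mathbb P,T)$ is uniformly bounded and equicontinuous. (A sequence $(f_T)$ is equicontinuous if for every point $y$ and $\varepsilon>0$ there is a neighbourhood $U$ of $y$ with $|f_T(y)-f_T(z)|<\varepsilon$ for all $z\in U$ and all $T$.) Out-of-sample guarantee with speed $(a_T)$: for all $x\in\mathcal X$ and $\mathbb P\in\mathcal P^o$, $\limsup_{T\to\infty}\frac1{a_T}\log\mathbb P^\infty\big(c(x,\mathbb P)>\hat c(x,\hat{\mathbb P}_T,T)\big)\le-1$. Order: $\hat c_1\preceq_{\mathcal C}\hat c_2$ iff for all $(x,\mathbb P)\in\mathcal X\times\mathcal P^o$, $\limsup_{T\to\infty}\frac{|\hat c_1(x,\mathbb P,T)-c(x,\mathbb P)|}{|\hat c_2(x,\mathbb P,T)-c(x,\mathbb P)|}\le1$, with the convention $0/0=1$. *)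

theory Defs
  imports "HOL-Probability.Probability"
begin

text \<open>Alphabet \<Sigma> is a finite type 'd (CARD('d) = d); distributions are vectors real^'d.\<close>

definition psimplex :: "(real^'d::finite) set" where
  "psimplex = {p. (\<forall>i. 0 \<le> p $ i) \<and> (\<Sum>i\<in>UNIV. p $ i) = 1}"

definition psimplex_int :: "(real^'d::finite) set" where
  "psimplex_int = {p. (\<forall>i. 0 < p $ i) \<and> (\<Sum>i\<in>UNIV. p $ i) = 1}"

definition cost :: "('x \<Rightarrow> 'd::finite \<Rightarrow> real) \<Rightarrow> 'x \<Rightarrow> real^'d \<Rightarrow> real" where
  "cost l x mu = (\<Sum>i\<in>UNIV. l x i * mu $ i)"

text \<open>Law of a single datum, and the joint law P^infinity of the i.i.d. sequence
  (xi_1, xi_2, ...) = (omega 0, omega 1, ...).\<close>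
definition law :: "real^'d \<Rightarrow> 'd measure" where
  "law P = density (count_space UNIV) (\<lambda>i. ennreal (P $ i))"

definition iid :: "real^'d \<Rightarrow> (nat \<Rightarrow> 'd) measure" where
  "iid P = PiM (UNIV :: nat set) (\<lambda>_. law P)"

definition emp :: "nat \<Rightarrow> (nat \<Rightarrow> 'd::finite) \<Rightarrow> real^'d" where
  "emp T \<omega> = (\<chi> i. real (card {t\<in>{..<T}. \<omega> t = i}) / real T)"

definition eln :: "real \<Rightarrow> ereal" where
  "eln p = (if p \<le> 0 then - \<infinity> else ereal (ln p))"

definition eratio :: "real \<Rightarrow> real \<Rightarrow> ereal" where
  "eratio a b = (if b = 0 then (if a = 0 then 1 else \<infinity>) else ereal (a / b))"

definition equicontinuous_on :: "'a::metric_space set \<Rightarrow> (nat \<Rightarrow> 'a \<Rightarrow> 'b::metric_space) \<Rightarrow> bool" where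
  "equicontinuous_on S f \<longleftrightarrow>
     (\<forall>y\<in>S. \<forall>e>0. \<exists>\<delta>>0. \<forall>z\<in>S. dist z y < \<delta> \<longrightarrow> (\<forall>T. dist (f T y) (f T z) < e))"

text \<open>Regular predictors (the class C). A predictor is chat x P T.\<close>
definition regular :: "(real^'n) set \<Rightarrow> (real^'n \<Rightarrow> real^'d \<Rightarrow> nat \<Rightarrow> real) \<Rightarrow> bool" where
  "regular X ch \<longleftrightarrow>
     (\<exists>B. \<forall>T. \<forall>x\<in>X. \<forall>P\<in>psimplex. \<bar>ch x P T\<bar> \<le> B) \<and>
     equicontinuous_on (X \<times> psimplex) (\<lambda>T (x, P). ch x P T) \<and>
     (\<exists>D :: nat \<Rightarrow> real^'n \<Rightarrow> real^'d \<Rightarrow> real^'d.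
        (\<forall>T. \<forall>x\<in>X. \<forall>P\<in>psimplex.
            ((\<lambda>Q. ch x Q T) has_derivative (\<lambda>h. D T x P \<bullet> h)) (at P within psimplex)) \<and>
        (\<exists>B. \<forall>T. \<forall>x\<in>X. \<forall>P\<in>psimplex. norm (D T x P) \<le> B) \<and>
        equicontinuous_on (X \<times> psimplex) (\<lambda>T (x, P). D T x P))"

definition oos_guarantee ::
  "(real^'n) set \<Rightarrow> (real^'n \<Rightarrow> 'd::finite \<Rightarrow> real) \<Rightarrow> (nat \<Rightarrow> real) \<Rightarrow> (real^'n \<Rightarrow> real^'d \<Rightarrow> nat \<Rightarrow> real) \<Rightarrow> bool" where
  "oos_guarantee X l a ch \<longleftrightarrow>
     (\<forall>x\<in>X. \<forall>P\<in>psimplex_int.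
        limsup (\<lambda>T. eln (measure (iid P) {\<omega>\<in>space (iid P). cost l x P > ch x (emp T \<omega>) T}) / ereal (a T))
          \<le> -1)"

definition pred_le ::
  "(real^'n) set \<Rightarrow> (real^'n \<Rightarrow> 'd::finite \<Rightarrow> real) \<Rightarrow> (real^'n \<Rightarrow> real^'d \<Rightarrow> nat \<Rightarrow> real) \<Rightarrow> (real^'n \<Rightarrow> real^'d \<Rightarrow> nat \<Rightarrow> real) \<Rightarrow> bool" where
  "pred_le X l c1 c2 \<longleftrightarrow>
     (\<forall>x\<in>X. \<forall>P\<in>psimplex_int.
        limsup (\<lambda>T. eratio \<bar>c1 x P T - cost l x P\<bar> \<bar>c2 x P T - cost l x P\<bar>) \<le> 1)"

definition robust_pred :: "(real^'n \<Rightarrow> 'd::finite \<Rightarrow> real) \<Rightarrow> real^'n \<Rightarrow> real^'d \<Rightarrow> nat \<Rightarrow> real" where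
  "robust_pred l x P T = Max ((\<lambda>i. l x i) ` UNIV)"

end

theory Submission
  imports Defs
begin


lemma law_sets[simp]: "sets (law P) = UNIV"
  by (simp add: law_def)

lemma law_space[simp]: "space (law P) = UNIV"
  by (simp add: law_def)

lemma law_single:
  assumes "\<forall>i. 0 \<le> P $ i"
  shows "emeasure (law P) {i} = ennreal (P $ i)"
  unfolding law_def
  by (subst emeasure_density) auto

lemma law_prob:
  assumes "P \<in> psimplex"
  shows "prob_space (law P)"
proof
  have "emeasure (law P) (space (law P)) = (\<integral>\<^sup>+ x. ennreal (P $ x) \<partial>count_space UNIV)"
    unfolding law_def by (subst emeasure_density) auto
  also have "\<dots> = (\<Sum>i\<in>UNIV. ennreal (P $ i))"
    by (simp add: nn_integral_count_space_finite)
  also have "\<dots> = ennreal (\<Sum>i\<in>UNIV. P $ i)"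
    using assms by (subst sum_ennreal) (auto simp: psimplex_def)
  also have "\<dots> = 1" using assms by (simp add: psimplex_def)
  finally show "emeasure (law P) (space (law P)) = 1" .
qed

lemma iid_pps:
  assumes "P \<in> psimplex"
  shows "product_prob_space (\<lambda>_::nat. law P)"
  unfolding product_prob_space_def product_prob_space_axioms_def product_sigma_finite_def
  using law_prob[OF assms] by (auto simp: prob_space_imp_sigma_finite)

lemma iid_space[simp]: "space (iid P) = UNIV"
  by (simp add: iid_def space_PiM)

lemma cyl_sets: "{\<omega>\<in>space (iid P). \<forall>t\<in>{..<T}. \<omega> t \<in> {s t}} \<in> sets (iid P)"
proof -
  have "{\<omega>\<in>space (iid P). \<forall>t\<in>{..<T}. \<omega> t \<in> {s t}} = prod_emb UNIV (\<lambda>_. law P) {..<T} (PiE {..<T} (\<lambda>t. {s t}))"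
    by (rule set_eqI) (simp add: prod_emb_iff iid_def space_PiM restrict_PiE_iff Pi_iff)
  also have "\<dots> \<in> sets (iid P)"
    unfolding iid_def by (rule sets_PiM_I) auto
  finally show ?thesis .
qed

lemma cyl_measure:
  assumes "P \<in> psimplex"
  shows "measure (iid P) {\<omega>\<in>space (iid P). \<forall>t\<in>{..<T}. \<omega> t \<in> {s t}} = (\<Prod>t<T. P $ s t)"
proof -
  interpret product_prob_space "\<lambda>_. law P" "UNIV :: nat set" using iid_pps[OF assms] by (simp add: product_prob_space_def)
  have nn: "\<forall>i. 0 \<le> P $ i" using assms by (simp add: psimplex_def)
  have "emeasure (iid P) {\<omega>\<in>space (iid P). \<forall>t\<in>{..<T}. \<omega> t \<in> {s t}} = (\<Prod>t<T. emeasure (law P) {s t})"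
    unfolding iid_def by (rule emeasure_PiM_Collect) simp_all
  also have "\<dots> = (\<Prod>t<T. ennreal (P $ s t))"
    using law_single[OF nn] by simp
  also have "\<dots> = ennreal (\<Prod>t<T. P $ s t)"
    using nn by (intro prod_ennreal) auto
  finally have e: "emeasure (iid P) {\<omega>\<in>space (iid P). \<forall>t\<in>{..<T}. \<omega> t \<in> {s t}} = ennreal (\<Prod>t<T. P $ s t)" .
  have "(\<Prod>t<T. P $ s t) \<ge> 0" using nn by (intro prod_nonneg) auto
  then show ?thesis unfolding measure_def e by simp
qed



lemma exists_seq_counts:
  fixes n :: "'d::finite \<Rightarrow> nat"
  shows "\<exists>\<omega>::nat\<Rightarrow>'d. \<forall>i. card {t\<in>{..<(\<Sum>j\<in>UNIV. n j)}. \<omega> t = i} = n i"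
proof -
  obtain xs :: "'d list" where xs: "set xs = UNIV" "distinct xs"
    using finite_distinct_list[of "UNIV :: 'd set"] by auto
  define L where "L = concat (map (\<lambda>i. replicate (n i) i) xs)"
  have lenL: "length L = (\<Sum>j\<in>UNIV. n j)"
    unfolding L_def using xs by (simp add: length_concat comp_def sum_list_distinct_conv_sum_set)
  have cnt: "length (filter ((=) i) L) = n i" for i
  proof -
    have "length (filter ((=) i) L) = sum_list (map (\<lambda>j. if i = j then n j else 0) xs)"
      unfolding L_def by (induction xs) auto
    also have "\<dots> = (\<Sum>j\<in>UNIV. if i = j then n j else 0)"
      using xs by (simp add: sum_list_distinct_conv_sum_set)
    also have "\<dots> = n i" by simp
    finally show ?thesis .
  qed
  show ?thesis
  proof (intro exI allI)
    fix i
    have "{t\<in>{..<(\<Sum>j\<in>UNIV. n j)}. L ! t = i} = {t. t < length L \<and> i = L ! t}"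
      using lenL by auto
    then show "card {t\<in>{..<(\<Sum>j\<in>UNIV. n j)}. L ! t = i} = n i"
      using cnt[of i] by (simp add: length_filter_conv_card)
  qed
qed


lemma div_bound:
  fixes n T p C :: real
  assumes "\<bar>n - T * p\<bar> \<le> C" "T > 0" and e: "e = n / T"
  shows "\<bar>e - p\<bar> \<le> C / T"
proof -
  have "e - p = (n - T * p) / T" using assms(2) unfolding e by (simp add: field_simps)
  then have "\<bar>e - p\<bar> = \<bar>n - T * p\<bar> / T" using assms(2) by (simp add: abs_divide)
  then show ?thesis using assms(1,2) by (simp add: divide_right_mono)
qed

lemma near_type:
  fixes P :: "real^'d::finite"
  assumes P: "P \<in> psimplex" and T: "T > 0"
  shows "\<exists>\<omega>. emp T \<omega> \<in> psimplex \<and> dist (emp T \<omega>) P \<le> real CARD('d) ^ 2 / real T"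
proof -
  obtain i0 :: 'd where True by auto
  define U where "U = UNIV - {i0}"
  have nn: "\<And>j. 0 \<le> P $ j" and s1: "(\<Sum>j\<in>UNIV. P $ j) = 1" using P by (auto simp: psimplex_def)
  define F where "F j = nat \<lfloor>real T * P $ j\<rfloor>" for j
  have Fr: "real (F j) = of_int \<lfloor>real T * P $ j\<rfloor>" for j
    unfolding F_def using nn[of j] by simp
  have Fle: "real (F j) \<le> real T * P $ j" for j unfolding Fr by simp
  have Fge: "real T * P $ j - 1 < real (F j)" for j unfolding Fr by linarith
  have sP: "P $ i0 + (\<Sum>j\<in>U. P $ j) = 1"
    using s1 unfolding U_def by (simp add: sum.remove[of UNIV i0, symmetric])
  have SF: "real (\<Sum>j\<in>U. F j) \<le> real T * (\<Sum>j\<in>U. P $ j)"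
    by (simp add: sum_distrib_left sum_mono Fle)
  have SFT: "(\<Sum>j\<in>U. F j) \<le> T"
  proof -
    have "real T * (\<Sum>j\<in>U. P $ j) \<le> real T" using sP nn[of i0] T by (simp add: mult_left_le)
    then show ?thesis using SF by linarith
  qed
  define n where "n i = (if i = i0 then T - (\<Sum>j\<in>U. F j) else F i)" for i
  have sumn: "(\<Sum>j\<in>UNIV. n j) = T"
  proof -
    have "(\<Sum>j\<in>UNIV. n j) = n i0 + (\<Sum>j\<in>U. n j)"
      unfolding U_def by (simp add: sum.remove[of UNIV i0])
    also have "(\<Sum>j\<in>U. n j) = (\<Sum>j\<in>U. F j)"
      by (intro sum.cong) (auto simp: n_def U_def)
    finally show ?thesis using SFT by (simp add: n_def)
  qed
  obtain \<omega> :: "nat \<Rightarrow> 'd" where \<omega>: "\<And>i. card {t\<in>{..<T}. \<omega> t = i} = n i"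
    using exists_seq_counts[of n] unfolding sumn by blast
  have E: "emp T \<omega> $ i = real (n i) / real T" for i
    unfolding emp_def using \<omega> by simp
  have inS: "emp T \<omega> \<in> psimplex"
    unfolding psimplex_def using T sumn
    proof (intro CollectI conjI allI)
    show "0 \<le> emp T \<omega> $ i" for i by (simp add: E)
    have "(\<Sum>i\<in>UNIV. real (n i)) = real T" using sumn by (simp flip: of_nat_sum)
    then show "(\<Sum>i\<in>UNIV. emp T \<omega> $ i) = 1" using T by (simp add: E flip: sum_divide_distrib)
  qed
  have cb: "\<bar>emp T \<omega> $ i - P $ i\<bar> \<le> real CARD('d) / real T" for i
  proof (cases "i = i0")
    case True
    have "real (n i0) = real T - real (\<Sum>j\<in>U. F j)" using SFT by (simp add: n_def of_nat_diff)
    have a: "real (\<Sum>j\<in>U. F j) = (\<Sum>j\<in>U. real (F j))" by simp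
    have b: "P $ i0 = 1 - (\<Sum>j\<in>U. P $ j)" using sP by simp
    have c: "(\<Sum>j\<in>U. real T * P $ j - real (F j)) = real T * (\<Sum>j\<in>U. P $ j) - (\<Sum>j\<in>U. real (F j))"
      by (simp add: sum_subtractf sum_distrib_left)
    have d: "real T * P $ i0 = real T - real T * (\<Sum>j\<in>U. P $ j)"
      unfolding b by (simp add: right_diff_distrib)
    have "real (n i0) - real T * P $ i0 = (\<Sum>j\<in>U. real T * P $ j - real (F j))"
      using \<open>real (n i0) = _\<close> a c d by linarith
    moreover have "(\<Sum>j\<in>U. real T * P $ j - real (F j)) \<ge> 0"
      by (intro sum_nonneg) (simp add: Fle)
    moreover have "(\<Sum>j\<in>U. real T * P $ j - real (F j)) \<le> (\<Sum>j\<in>U. 1)"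
      proof (intro sum_mono)
      fix j show "real T * P $ j - real (F j) \<le> 1" using Fge[of j] by linarith
    qed
    moreover have "(\<Sum>j\<in>U. (1::real)) \<le> real CARD('d)"
      unfolding U_def by (simp add: card_Diff_subset)
    ultimately have "\<bar>real (n i0) - real T * P $ i0\<bar> \<le> real CARD('d)" by linarith
    then show ?thesis using True T by (intro div_bound) (auto simp: E)
  next
    case False
    have "\<bar>real (n i) - real T * P $ i\<bar> \<le> 1" using Fle[of i] Fge[of i] False by (simp add: n_def)
    moreover have "(1::real) \<le> real CARD('d)" by simp
    ultimately have "\<bar>real (n i) - real T * P $ i\<bar> \<le> real CARD('d)" by linarith
    then show ?thesis using T by (intro div_bound) (auto simp: E)
  qed
  have "dist (emp T \<omega>) P = norm (emp T \<omega> - P)" by (simp add: dist_norm)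
  also have "\<dots> \<le> (\<Sum>i\<in>UNIV. \<bar>(emp T \<omega> - P) $ i\<bar>)" by (rule norm_le_l1_cart)
  also have "\<dots> \<le> (\<Sum>i\<in>(UNIV::'d set). real CARD('d) / real T)"
    by (intro sum_mono) (simp add: cb)
  also have "\<dots> = real CARD('d) ^ 2 / real T" by (simp add: power2_eq_square)
  finally show ?thesis using inS by blast
qed



lemma emp_cong: "(\<And>t. t < T \<Longrightarrow> \<omega> t = \<omega>' t) \<Longrightarrow> emp T \<omega> = emp T \<omega>'"
  unfolding emp_def by (intro arg_cong[where f=vec_lambda] ext) (metis (mono_tags, lifting) lessThan_iff mem_Collect_eq)

lemma bad_sets:
  fixes bad :: "real^'d::finite \<Rightarrow> bool"
  shows "{\<omega>\<in>space (iid P). bad (emp T \<omega>)} \<in> sets (iid P)"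
proof -
  let ?C = "\<lambda>s. {\<omega>\<in>space (iid P). \<forall>t\<in>{..<T}. \<omega> t \<in> {s t}}"
  let ?B = "{\<omega>\<in>space (iid P). bad (emp T \<omega>)}"
  have eq: "?B = (\<Union>s\<in>(\<lambda>\<omega>. restrict \<omega> {..<T}) ` ?B. ?C s)"
  proof (intro set_eqI iffI)
    fix \<omega> assume "\<omega> \<in> ?B"
    then show "\<omega> \<in> (\<Union>s\<in>(\<lambda>\<omega>. restrict \<omega> {..<T}) ` ?B. ?C s)"
      by (intro UN_I[of "restrict \<omega> {..<T}"]) auto
  next
    fix \<omega> assume "\<omega> \<in> (\<Union>s\<in>(\<lambda>\<omega>. restrict \<omega> {..<T}) ` ?B. ?C s)"
    then obtain \<omega>' where w': "\<omega>' \<in> ?B" "\<omega> \<in> ?C (restrict \<omega>' {..<T})" by blast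
    then have "emp T \<omega> = emp T \<omega>'" by (intro emp_cong) auto
    then show "\<omega> \<in> ?B" using w' by simp
  qed
  have fin: "finite ((\<lambda>\<omega>. restrict \<omega> {..<T}) ` ?B)"
  proof (rule finite_subset)
    show "(\<lambda>\<omega>. restrict \<omega> {..<T}) ` ?B \<subseteq> PiE {..<T} (\<lambda>_. UNIV)"
      by (rule image_subsetI) (simp add: restrict_PiE_iff)
    show "finite (PiE {..<T} (\<lambda>_. UNIV :: 'd set))" by (intro finite_PiE) auto
  qed
  have "(\<Union>s\<in>(\<lambda>\<omega>. restrict \<omega> {..<T}) ` ?B. ?C s) \<in> sets (iid P)"
    by (rule sets.finite_UN[OF fin]) (rule cyl_sets)
  then show ?thesis using eq by simp
qed

lemma eventually_good:
  fixes bad :: "nat \<Rightarrow> real^'d::finite \<Rightarrow> bool" and a :: "nat \<Rightarrow> real"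
  assumes P: "P \<in> psimplex_int"
    and lim: "limsup (\<lambda>T. eln (measure (iid P) {\<omega>\<in>space (iid P). bad T (emp T \<omega>)}) / ereal (a T)) \<le> -1"
    and a_pos: "\<And>T. a T > 0"
    and superexp: "filterlim (\<lambda>T. a T / real T) at_top sequentially"
  shows "eventually (\<lambda>T. \<forall>\<omega>. \<not> bad T (emp T \<omega>)) sequentially"
proof -
  define pmin where "pmin = Min (range (\<lambda>i. P $ i))"
  have Ppos: "\<And>i. P $ i > 0" and s1: "(\<Sum>i\<in>UNIV. P $ i) = 1" using P by (auto simp: psimplex_int_def)
  have PS: "P \<in> psimplex" using P by (auto simp: psimplex_int_def psimplex_def less_imp_le)
  have pmin_pos: "pmin > 0" unfolding pmin_def using Ppos by (subst Min_gr_iff) auto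
  have pmin_le: "pmin \<le> P $ i" for i unfolding pmin_def by (intro Min_le) auto
  have P_le1: "P $ i \<le> 1" for i
  proof -
    have "P $ i \<le> (\<Sum>j\<in>UNIV. P $ j)" by (rule member_le_sum) (auto simp: less_imp_le Ppos)
    then show ?thesis using s1 by simp
  qed
  have lnp: "ln pmin \<le> 0" using pmin_pos pmin_le[of undefined] P_le1[of undefined] by simp
  define f where "f T = eln (measure (iid P) {\<omega>\<in>space (iid P). bad T (emp T \<omega>)}) / ereal (a T)" for T
  have ev1: "eventually (\<lambda>T. f T < ereal (-1/2)) sequentially"
  proof (rule Limsup_lessD)
    have "(-1::ereal) = ereal (-1)" by (simp add: one_ereal_def)
    then have "(-1::ereal) < ereal (-1/2)" by simp
    then show "limsup f < ereal (-1/2)" using le_less_trans[OF lim] unfolding f_def by blast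
  qed
  have "((\<lambda>T. ln pmin * inverse (a T / real T)) \<longlongrightarrow> ln pmin * 0) sequentially"
    by (intro tendsto_mult tendsto_const tendsto_inverse_0_at_top superexp)
  then have "eventually (\<lambda>T. ln pmin * inverse (a T / real T) > -1/2) sequentially"
    by (intro order_tendstoD) auto
  then have ev2: "eventually (\<lambda>T. real T * ln pmin / a T > -1/2) sequentially"
    by eventually_elim (simp add: field_simps)
  show ?thesis
    using ev1 ev2
  proof eventually_elim
    case (elim T)
    show "\<forall>\<omega>. \<not> bad T (emp T \<omega>)"
    proof (intro allI notI)
      fix \<omega> assume b: "bad T (emp T \<omega>)"
      let ?B = "{\<omega>\<in>space (iid P). bad T (emp T \<omega>)}"
      let ?C = "{\<omega>'\<in>space (iid P). \<forall>t\<in>{..<T}. \<omega>' t \<in> {\<omega> t}}"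
      have sub: "?C \<subseteq> ?B"
      proof
        fix \<omega>' assume "\<omega>' \<in> ?C"
        then have "emp T \<omega>' = emp T \<omega>" by (intro emp_cong) auto
        then show "\<omega>' \<in> ?B" using b by simp
      qed
      interpret product_prob_space "\<lambda>_. law P" "UNIV :: nat set"
        using iid_pps[OF PS] by (simp add: product_prob_space_def)
      have "measure (iid P) ?C \<le> measure (iid P) ?B"
        unfolding iid_def by (intro finite_measure_mono) (use sub bad_sets[where bad="bad T" and P=P and T=T] in \<open>simp_all add: iid_def\<close>)
      moreover have "measure (iid P) ?C = (\<Prod>t<T. P $ \<omega> t)" by (rule cyl_measure[OF PS])
      moreover have "pmin ^ T \<le> (\<Prod>t<T. P $ \<omega> t)"
      proof -
        have "(\<Prod>t<T. pmin) \<le> (\<Prod>t<T. P $ \<omega> t)"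
          by (intro prod_mono) (auto simp: pmin_le less_imp_le pmin_pos)
        then show ?thesis by simp
      qed
      ultimately have mB: "pmin ^ T \<le> measure (iid P) ?B" by linarith
      have mpos: "measure (iid P) ?B > 0" using mB pmin_pos by (meson less_le_trans zero_less_power)
      have "real T * ln pmin = ln (pmin ^ T)" using pmin_pos by (simp add: ln_realpow)
      also have "\<dots> \<le> ln (measure (iid P) ?B)" using mB pmin_pos by (intro ln_mono) auto
      finally have lnB: "real T * ln pmin \<le> ln (measure (iid P) ?B)" .
      have "f T = ereal (ln (measure (iid P) ?B) / a T)"
        unfolding f_def eln_def using mpos a_pos[of T] by simp
      moreover have "real T * ln pmin / a T \<le> ln (measure (iid P) ?B) / a T"
        using lnB a_pos[of T] by (simp add: divide_right_mono)
      ultimately show False using elim by simp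
    qed
  qed
qed



lemma cont_Max:
  fixes l :: "'a::topological_space \<Rightarrow> 'd::finite \<Rightarrow> real"
  assumes "\<And>i. continuous_on X (\<lambda>x. l x i)" "finite A" "A \<noteq> {}"
  shows "continuous_on X (\<lambda>x. Max ((\<lambda>i. l x i) ` A))"
  using assms(2,3)
proof (induction A rule: finite_ne_induct)
  case (singleton i) then show ?case using assms(1) by simp
next
  case (insert i A)
  then show ?case using assms(1) by (simp add: continuous_on_max)
qed

lemma cost_le_Max:
  assumes "P \<in> psimplex"
  shows "cost l x P \<le> Max (range (\<lambda>i. l x i))"
proof -
  have nn: "\<And>i. 0 \<le> P $ i" and s1: "(\<Sum>i\<in>UNIV. P $ i) = 1" using assms by (auto simp: psimplex_def)
  have "cost l x P \<le> (\<Sum>i\<in>UNIV. Max (range (\<lambda>i. l x i)) * P $ i)"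
    unfolding cost_def by (intro sum_mono mult_right_mono nn) auto
  also have "\<dots> = Max (range (\<lambda>i. l x i))" by (simp add: sum_distrib_left[symmetric] s1)
  finally show ?thesis .
qed

lemma robust_regular:
  fixes X :: "(real^'n) set" and l :: "real^'n \<Rightarrow> 'd::finite \<Rightarrow> real"
  assumes X: "compact X" and l_cont: "\<And>i. continuous_on X (\<lambda>x. l x i)"
  shows "regular X (robust_pred l)"
proof -
  define R where "R x = Max (range (\<lambda>i. l x i))" for x
  have Rc: "continuous_on X R" unfolding R_def by (intro cont_Max l_cont) auto
  have "compact (R ` X)" by (intro compact_continuous_image Rc X)
  then obtain B where B: "\<And>y. y \<in> R ` X \<Longrightarrow> norm y \<le> B"
    using compact_imp_bounded bounded_iff by metis
  have bnd: "\<exists>B. \<forall>T. \<forall>x\<in>X. \<forall>P\<in>psimplex. \<bar>robust_pred l x P T\<bar> \<le> B"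
    using B by (intro exI[of _ B]) (auto simp: robust_pred_def R_def)
  have Rc2: "continuous_on (X \<times> (psimplex :: (real^'d) set)) (\<lambda>z. R (fst z))"
    by (intro continuous_on_compose2[OF Rc] continuous_intros) auto
  have eq: "equicontinuous_on (X \<times> (psimplex :: (real^'d) set)) (\<lambda>T (x, P). robust_pred l x P T)"
    unfolding equicontinuous_on_def
  proof (intro ballI allI impI)
    fix y :: "(real^'n) \<times> (real^'d)" and e :: real assume y: "y \<in> X \<times> psimplex" and e: "e > 0"
    obtain d where d: "d > 0" "\<And>z. z \<in> X \<times> psimplex \<Longrightarrow> dist z y < d \<Longrightarrow> dist (R (fst z)) (R (fst y)) < e"
      using Rc2 y e unfolding continuous_on_iff by metis
    show "\<exists>\<delta>>0. \<forall>z\<in>X \<times> psimplex. dist z y < \<delta> \<longrightarrow> (\<forall>T. dist ((\<lambda>(x, P). robust_pred l x P T) y) ((\<lambda>(x, P). robust_pred l x P T) z) < e)"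
      using d by (intro exI[of _ d]) (auto simp: robust_pred_def R_def case_prod_beta dist_commute)
  qed
  have der: "\<exists>D :: nat \<Rightarrow> real^'n \<Rightarrow> real^'d \<Rightarrow> real^'d.
        (\<forall>T. \<forall>x\<in>X. \<forall>P\<in>psimplex.
            ((\<lambda>Q. robust_pred l x Q T) has_derivative (\<lambda>h. D T x P \<bullet> h)) (at P within psimplex)) \<and>
        (\<exists>B. \<forall>T. \<forall>x\<in>X. \<forall>P\<in>psimplex. norm (D T x P) \<le> B) \<and>
        equicontinuous_on (X \<times> psimplex) (\<lambda>T (x, P). D T x P)"
    by (intro exI[of _ "\<lambda>_ _ _. 0"] conjI)
       (auto simp: robust_pred_def equicontinuous_on_def intro: has_derivative_const)
  show ?thesis unfolding regular_def using bnd eq der by blast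
qed



lemma claim_lower:
  fixes X :: "(real^'n) set" and l :: "real^'n \<Rightarrow> 'd::finite \<Rightarrow> real"
    and a :: "nat \<Rightarrow> real" and ch :: "real^'n \<Rightarrow> real^'d \<Rightarrow> nat \<Rightarrow> real"
  assumes a_pos: "\<And>T. a T > 0"
    and superexp: "filterlim (\<lambda>T. a T / real T) at_top sequentially"
    and reg: "regular X ch" and oos: "oos_guarantee X l a ch"
    and x: "x \<in> X" and P: "P \<in> psimplex_int"
    and lt: "cost l x P < Max (range (\<lambda>i. l x i))"
    and eps: "\<epsilon> > 0" and epsl: "\<epsilon> < Max (range (\<lambda>i. l x i)) - cost l x P"
  shows "eventually (\<lambda>T. ch x P T \<ge> Max (range (\<lambda>i. l x i)) - \<epsilon>) sequentially"
proof -
  define M where "M = Max (range (\<lambda>i. l x i))"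
  define c where "c = cost l x P"
  have Mc: "c < M" using lt by (simp add: M_def c_def)
  have "Max (range (l x)) \<in> range (l x)" by (rule Max_in) auto
  then obtain i0 where i0: "l x i0 = M" unfolding M_def by (metis rangeE)
  define \<eta> where "\<eta> = \<epsilon> / (2 * (M - c))"
  have \<eta>pos: "\<eta> > 0" using eps Mc by (simp add: \<eta>_def)
  define P' :: "real^'d" where "P' = (\<chi> i. (if i = i0 then 1 - \<eta> else 0) + \<eta> * P $ i)"
  have Ppos: "\<And>i. P $ i > 0" and s1: "(\<Sum>i\<in>UNIV. P $ i) = 1" using P by (auto simp: psimplex_int_def)
  have P'int: "P' \<in> psimplex_int" if "\<eta> \<le> 1"
  proof -
    have "(\<Sum>i\<in>UNIV. P' $ i) = (\<Sum>i\<in>UNIV. (if i = i0 then 1 - \<eta> else 0)) + \<eta> * (\<Sum>i\<in>UNIV. P $ i)"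
      by (simp add: P'_def sum.distrib sum_distrib_left)
    also have "\<dots> = 1" using s1 by simp
    moreover have "P' $ i > 0" for i
    proof -
      have "(if i = i0 then 1 - \<eta> else 0) \<ge> 0" using that by simp
      moreover have "\<eta> * P $ i > 0" using \<eta>pos Ppos[of i] by simp
      ultimately show ?thesis unfolding P'_def by simp
    qed
    ultimately show ?thesis unfolding psimplex_int_def by simp
  qed
  have cP': "cost l x P' = (1 - \<eta>) * M + \<eta> * c"
  proof -
    have "cost l x P' = (\<Sum>i\<in>UNIV. l x i * (if i = i0 then 1 - \<eta> else 0)) + \<eta> * (\<Sum>i\<in>UNIV. l x i * P $ i)"
      by (simp add: cost_def P'_def sum.distrib sum_distrib_left algebra_simps)
    also have "(\<Sum>i\<in>UNIV. l x i * (if i = i0 then 1 - \<eta> else 0)) = (\<Sum>i\<in>UNIV. (if i = i0 then l x i0 * (1 - \<eta>) else 0))"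
      by (intro sum.cong) auto
    also have "\<dots> = l x i0 * (1 - \<eta>)" by simp
    also have "l x i0 * (1 - \<eta>) + \<eta> * (\<Sum>i\<in>UNIV. l x i * P $ i) = (1 - \<eta>) * M + \<eta> * c"
      using i0 by (simp add: c_def cost_def)
    finally show ?thesis .
  qed
  have \<eta>le: "\<eta> \<le> 1" using epsl Mc eps unfolding \<eta>_def M_def[symmetric] c_def[symmetric]
    by (simp add: divide_simps)
  have P'i: "P' \<in> psimplex_int" using P'int \<eta>le by blast
  have e1: "\<eta> * (M - c) = \<epsilon>/2" unfolding \<eta>_def using Mc by (simp add: field_simps)
  have e2: "(1-\<eta>)*M + \<eta>*c = M - \<eta>*(M-c)" by (simp add: algebra_simps)
  have cP'ge: "cost l x P' = M - \<epsilon>/2" by (simp only: cP' e2 e1)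
  have lim': "limsup (\<lambda>T. eln (measure (iid P') {\<omega>\<in>space (iid P'). cost l x P' > ch x (emp T \<omega>) T}) / ereal (a T)) \<le> -1"
    using oos x P'i unfolding oos_guarantee_def by blast
  have good: "eventually (\<lambda>T. \<forall>\<omega>. \<not> cost l x P' > ch x (emp T \<omega>) T) sequentially"
    by (rule eventually_good[where bad = "\<lambda>T Q. cost l x P' > ch x Q T", OF P'i lim' a_pos superexp])
  have PS: "P \<in> psimplex" using P by (auto simp: psimplex_int_def psimplex_def less_imp_le)
  have eqc: "equicontinuous_on (X \<times> psimplex) (\<lambda>T (x, P). ch x P T)" using reg by (simp add: regular_def)
  obtain \<delta> where \<delta>: "\<delta> > 0" "\<And>z. z \<in> X \<times> psimplex \<Longrightarrow> dist z (x, P) < \<delta> \<Longrightarrow> (\<forall>T. dist ((\<lambda>(x, P). ch x P T) (x, P)) ((\<lambda>(x, P). ch x P T) z) < \<epsilon>/2)"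
  proof -
    have "(x, P) \<in> X \<times> psimplex" using x PS by simp
    moreover have "\<epsilon>/2 > 0" using eps by simp
    ultimately have "\<exists>\<delta>>0. \<forall>z\<in>X \<times> psimplex. dist z (x, P) < \<delta> \<longrightarrow> (\<forall>T. dist ((\<lambda>(x, P). ch x P T) (x, P)) ((\<lambda>(x, P). ch x P T) z) < \<epsilon>/2)"
      using eqc unfolding equicontinuous_on_def by blast
    then show ?thesis using that by blast
  qed
  have evd: "eventually (\<lambda>T. real CARD('d) ^ 2 / real T < \<delta>) sequentially"
    by (intro order_tendstoD(2)[OF lim_const_over_n] \<delta>(1))
  show ?thesis
    using good evd eventually_gt_at_top[of "0::nat"]
  proof eventually_elim
    case (elim T)
    obtain \<omega> where w: "emp T \<omega> \<in> psimplex" "dist (emp T \<omega>) P \<le> real CARD('d) ^ 2 / real T"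
      using near_type[OF PS, of T] elim(3) by blast
    have "dist (x, emp T \<omega>) (x, P) = dist (emp T \<omega>) P" by (simp add: dist_Pair_Pair)
    then have dd: "dist (x, emp T \<omega>) (x, P) < \<delta>" using w(2) elim(2) by linarith
    have mm: "(x, emp T \<omega>) \<in> X \<times> psimplex" using x w by simp
    have "dist (ch x P T) (ch x (emp T \<omega>) T) < \<epsilon>/2" using \<delta>(2)[OF mm dd] by simp
    moreover have "ch x (emp T \<omega>) T \<ge> M - \<epsilon>/2" using elim(1)[rule_format, of \<omega>] cP'ge by linarith
    ultimately show ?case unfolding M_def[symmetric] dist_real_def
      using abs_less_iff[of "ch x P T - ch x (emp T \<omega>) T" "\<epsilon>/2"] by linarith
  qed
qed



lemma pred_le_part:
  fixes X :: "(real^'n) set" and l :: "real^'n \<Rightarrow> 'd::finite \<Rightarrow> real"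
    and a :: "nat \<Rightarrow> real" and ch :: "real^'n \<Rightarrow> real^'d \<Rightarrow> nat \<Rightarrow> real"
  assumes a_pos: "\<And>T. a T > 0"
    and superexp: "filterlim (\<lambda>T. a T / real T) at_top sequentially"
    and reg: "regular X ch" and oos: "oos_guarantee X l a ch"
  shows "pred_le X l (robust_pred l) ch"
  unfolding pred_le_def
proof (intro ballI)
  fix x and P :: "real^'d" assume x: "x \<in> X" and P: "P \<in> psimplex_int"
  define M where "M = Max (range (\<lambda>i. l x i))"
  define c where "c = cost l x P"
  have PS: "P \<in> psimplex" using P by (auto simp: psimplex_int_def psimplex_def less_imp_le)
  have cM: "c \<le> M" unfolding c_def M_def by (rule cost_le_Max[OF PS])
  have rp: "robust_pred l x P T = M" for T by (simp add: robust_pred_def M_def)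
  show "limsup (\<lambda>T. eratio \<bar>robust_pred l x P T - cost l x P\<bar> \<bar>ch x P T - cost l x P\<bar>) \<le> 1"
  proof (cases "c = M")
    case True
    show ?thesis
      by (rule Limsup_bounded) (simp add: rp True c_def[symmetric] eratio_def)
  next
    case False
    then have lt: "c < M" using cM by simp
    show ?thesis
    proof (rule ereal_le_epsilon2)
      fix e :: real assume e: "e > 0"
      define \<epsilon> where "\<epsilon> = e * (M - c) / (1 + e)"
      have \<epsilon>pos: "\<epsilon> > 0" using e lt by (simp add: \<epsilon>_def)
      have key: "M - c - \<epsilon> = (M - c) / (1 + e)" using e by (simp add: \<epsilon>_def field_simps)
      have \<epsilon>lt: "\<epsilon> < M - c" using key lt e by (smt (verit) divide_pos_pos)
      have ev: "eventually (\<lambda>T. ch x P T \<ge> M - \<epsilon>) sequentially"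
        unfolding M_def
        by (rule claim_lower[OF a_pos superexp reg oos x P]) (use lt \<epsilon>pos \<epsilon>lt in \<open>simp_all add: M_def c_def\<close>)
      have "eventually (\<lambda>T. eratio \<bar>robust_pred l x P T - cost l x P\<bar> \<bar>ch x P T - cost l x P\<bar> \<le> 1 + ereal e) sequentially"
        using ev
      proof eventually_elim
        case (elim T)
        have pos: "ch x P T - c \<ge> (M - c) / (1 + e)" using elim key by linarith
        have pos2: "(M - c) / (1 + e) > 0" using lt e by simp
        have chc: "c < ch x P T" using pos pos2 by linarith
        have "(M - c) / (ch x P T - c) \<le> (M - c) / ((M - c) / (1 + e))"
          using pos pos2 lt e chc by (intro divide_left_mono) (auto simp: zero_less_mult_iff zero_less_divide_iff)
        also have "\<dots> = 1 + e" using lt e by simp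
        finally have r: "(M - c) / (ch x P T - c) \<le> 1 + e" .
        have "eratio \<bar>robust_pred l x P T - cost l x P\<bar> \<bar>ch x P T - cost l x P\<bar> = ereal ((M - c) / (ch x P T - c))"
          using pos pos2 lt unfolding eratio_def rp c_def[symmetric] by simp
        then show ?case using r by simp
      qed
      then show "limsup (\<lambda>T. eratio \<bar>robust_pred l x P T - cost l x P\<bar> \<bar>ch x P T - cost l x P\<bar>) \<le> 1 + ereal e"
        by (rule Limsup_bounded)
    qed
  qed
qed

theorem mainTheorem2:
  fixes X :: "(real^'n) set"
    and l :: "real^'n \<Rightarrow> 'd::finite \<Rightarrow> real"
    and a :: "nat \<Rightarrow> real"
  assumes d2: "CARD('d) \<ge> 2"
    and X: "compact X"
    and l_cont: "\<And>i. continuous_on X (\<lambda>x. l x i)"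
    and a_pos: "\<And>T. a T > 0"
    and a_inf: "filterlim a at_top sequentially"
    and superexp: "filterlim (\<lambda>T. a T / real T) at_top sequentially"
  shows "regular X (robust_pred l)
    \<and> oos_guarantee X l a (robust_pred l)
    \<and> (\<forall>x\<in>X. \<forall>P\<in>psimplex. \<forall>T.
          measure (iid P) {\<omega>\<in>space (iid P). cost l x P > robust_pred l x (emp T \<omega>) T} = 0)
    \<and> (\<forall>ch. regular X ch \<and> oos_guarantee X l a ch \<longrightarrow> pred_le X l (robust_pred l) ch)"
proof (intro conjI)
  show "regular X (robust_pred l)" by (rule robust_regular[OF X l_cont])
  have empty: "{\<omega>\<in>space (iid P). cost l x P > robust_pred l x (emp T \<omega>) T} = {}" if "P \<in> psimplex" for x and P :: "real^'d" and T
  proof -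
    have "\<not> (cost l x P > robust_pred l x Q T)" for Q
      using cost_le_Max[OF that, of l x] unfolding robust_pred_def by linarith
    then show ?thesis by blast
  qed
  show "\<forall>x\<in>X. \<forall>P\<in>psimplex. \<forall>T.
          measure (iid P) {\<omega>\<in>space (iid P). cost l x P > robust_pred l x (emp T \<omega>) T} = 0"
    using empty by simp
  show "oos_guarantee X l a (robust_pred l)"
    unfolding oos_guarantee_def
  proof (intro ballI)
    fix x and P :: "real^'d" assume "x \<in> X" and P: "P \<in> psimplex_int"
    have PS: "P \<in> psimplex" using P by (auto simp: psimplex_int_def psimplex_def less_imp_le)
    have "eln (measure (iid P) {\<omega>\<in>space (iid P). cost l x P > robust_pred l x (emp T \<omega>) T}) / ereal (a T) = - \<infinity>" for T
      using a_pos[of T] unfolding empty[OF PS] by (simp add: eln_def)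
    then show "limsup (\<lambda>T. eln (measure (iid P) {\<omega>\<in>space (iid P). cost l x P > robust_pred l x (emp T \<omega>) T}) / ereal (a T)) \<le> -1"
      by (intro Limsup_bounded) simp
  qed
  show "\<forall>ch. regular X ch \<and> oos_guarantee X l a ch \<longrightarrow> pred_le X l (robust_pred l) ch"
    using pred_le_part[OF a_pos superexp] by blast
qed


end
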